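(* Let $(Y,\preceq,\prec,\to)$ be a solid vector space, let $b\in Y$ with $b\succ0$, and let $\|\cdot\|\colon Y\to\mathbb R$ be the Minkowski functional of $[-b,b]$. Then: (i) $\|\cdot\|$ is a monotone norm on $Y$ and $\|x\|=\min\{\lambda\ge0: -\lambda b\preceq x\preceq\lambda b\}$ for all $x\in Y$; (ii) for $x\in Y$ and $\varepsilon>0$, $\|x\|<\varepsilon$ if and only if $-\varepsilon b\prec x\prec\varepsilon b$.
   Context: Vector space with convergence: a real vector space $Y$ with a relation $\to$ between sequences in $Y$ and points of $Y$ (uniqueness of limits not assumed) such that (C1) $x_n\to x$, $y_n\to y$ imply $x_n+y_n\to x+y$; (C2) $x_n\to x$, $\lambda\in\mathbb R$ imply $\lambda x_n\to\lambda x$; (C3) $\lambda_n\to\lambda$ in $\mathbb R$ imply $\lambda_n x\to\lambda x$. $A\subseteq Y$ is open if $x_n\to x\in A$ implies $x_n\in A$ for all but finitely many $n$; closed if $x_n\to x$, $x_n\in A$ $\forall n$ imply $x\in A$; $A^\circ$ is the union of all open subsets of $A$. A cone is a nonempty closed $K$ with $\lambda K\subseteq K$ ($\lambda\ge0$), $K+K\subseteq K$, $K\cap(-K)=\{0\}$; solid if $K\ne\{0\}$, $K^\circ\ne\emptyset$. A vector ordering is a partial order $\preceq$ with (V1) $x\preceq y\Rightarrow x+z\preceq y+z$; (V2) $\lambda\ge0$, $x\preceq y\Rightarrow\lambda x\preceq\lambda y$; (V3) $x_n\to x$, $y_n\to y$, $x_n\preceq y_n$ $\forall n\Rightarrow x\preceq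 y$. Solid vector space: positive cone $K=\{x:x\succeq0\}$ solid, with $x\prec y$ iff $y-x\in K^\circ$. $[a,b]=\{x:a\preceq x\preceq b\}$. Minkowski functional of $A$: $\|x\|=\inf\{\lambda\ge0: x\in\lambda A\}$. A norm is monotone if $\|x\|\le\|y\|$ whenever $0\preceq x\preceq y$. *)

theory Defs
  imports "HOL-Analysis.Analysis"
begin

definition conv_space :: "((nat \<Rightarrow> 'a::real_vector) \<Rightarrow> 'a \<Rightarrow> bool) \<Rightarrow> bool" where
  "conv_space conv \<longleftrightarrow>
     (\<forall>xs ys x y. conv xs x \<longrightarrow> conv ys y \<longrightarrow> conv (\<lambda>n. xs n + ys n) (x + y)) \<and>
     (\<forall>xs x (c::real). conv xs x \<longrightarrow> conv (\<lambda>n. c *\<^sub>R xs n) (c *\<^sub>R x)) \<and>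
     (\<forall>(ls::nat \<Rightarrow> real) l x. ls \<longlonglongrightarrow> l \<longrightarrow> conv (\<lambda>n. ls n *\<^sub>R x) (l *\<^sub>R x))"

definition c_open :: "((nat \<Rightarrow> 'a) \<Rightarrow> 'a \<Rightarrow> bool) \<Rightarrow> 'a set \<Rightarrow> bool" where
  "c_open conv A \<longleftrightarrow> (\<forall>xs x. conv xs x \<longrightarrow> x \<in> A \<longrightarrow> (\<forall>\<^sub>F n in sequentially. xs n \<in> A))"

definition c_closed :: "((nat \<Rightarrow> 'a) \<Rightarrow> 'a \<Rightarrow> bool) \<Rightarrow> 'a set \<Rightarrow> bool" where
  "c_closed conv A \<longleftrightarrow> (\<forall>xs x. conv xs x \<longrightarrow> (\<forall>n. xs n \<in> A) \<longrightarrow> x \<in> A)"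

definition c_interior :: "((nat \<Rightarrow> 'a) \<Rightarrow> 'a \<Rightarrow> bool) \<Rightarrow> 'a set \<Rightarrow> 'a set" where
  "c_interior conv A = \<Union>{U. U \<subseteq> A \<and> c_open conv U}"

definition is_cone :: "((nat \<Rightarrow> 'a::real_vector) \<Rightarrow> 'a \<Rightarrow> bool) \<Rightarrow> 'a set \<Rightarrow> bool" where
  "is_cone conv K \<longleftrightarrow> K \<noteq> {} \<and> c_closed conv K \<and>
     (\<forall>(c::real) x. c \<ge> 0 \<longrightarrow> x \<in> K \<longrightarrow> c *\<^sub>R x \<in> K) \<and>
     (\<forall>x y. x \<in> K \<longrightarrow> y \<in> K \<longrightarrow> x + y \<in> K) \<and>
     K \<inter> uminus ` K = {0}"

definition solid_cone :: "((nat \<Rightarrow> 'a::real_vector) \<Rightarrow> 'a \<Rightarrow> bool) \<Rightarrow> 'a set \<Rightarrow> bool" where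
  "solid_cone conv K \<longleftrightarrow> is_cone conv K \<and> K \<noteq> {0} \<and> c_interior conv K \<noteq> {}"

definition vector_ordering ::
  "((nat \<Rightarrow> 'a::real_vector) \<Rightarrow> 'a \<Rightarrow> bool) \<Rightarrow> ('a \<Rightarrow> 'a \<Rightarrow> bool) \<Rightarrow> bool" where
  "vector_ordering conv le \<longleftrightarrow>
     (\<forall>x. le x x) \<and> (\<forall>x y z. le x y \<longrightarrow> le y z \<longrightarrow> le x z) \<and>
     (\<forall>x y. le x y \<longrightarrow> le y x \<longrightarrow> x = y) \<and>
     (\<forall>x y z. le x y \<longrightarrow> le (x + z) (y + z)) \<and>
     (\<forall>(c::real) x y. c \<ge> 0 \<longrightarrow> le x y \<longrightarrow> le (c *\<^sub>R x) (c *\<^sub>R y)) \<and>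
     (\<forall>xs ys x y. conv xs x \<longrightarrow> conv ys y \<longrightarrow> (\<forall>n. le (xs n) (ys n)) \<longrightarrow> le x y)"

definition pos_cone :: "('a::real_vector \<Rightarrow> 'a \<Rightarrow> bool) \<Rightarrow> 'a set" where
  "pos_cone le = {x. le 0 x}"

definition solid_vector_space ::
  "((nat \<Rightarrow> 'a::real_vector) \<Rightarrow> 'a \<Rightarrow> bool) \<Rightarrow> ('a \<Rightarrow> 'a \<Rightarrow> bool) \<Rightarrow> bool" where
  "solid_vector_space conv le \<longleftrightarrow>
     conv_space conv \<and> vector_ordering conv le \<and> solid_cone conv (pos_cone le)"

definition strict_le ::
  "((nat \<Rightarrow> 'a::real_vector) \<Rightarrow> 'a \<Rightarrow> bool) \<Rightarrow> ('a \<Rightarrow> 'a \<Rightarrow> bool) \<Rightarrow> 'a \<Rightarrow> 'a \<Rightarrow> bool" where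
  "strict_le conv le x y \<longleftrightarrow> y - x \<in> c_interior conv (pos_cone le)"

definition order_interval :: "('a \<Rightarrow> 'a \<Rightarrow> bool) \<Rightarrow> 'a \<Rightarrow> 'a \<Rightarrow> 'a set" where
  "order_interval le a b = {x. le a x \<and> le x b}"

definition minkowski :: "'a::real_vector set \<Rightarrow> 'a \<Rightarrow> real" where
  "minkowski A x = Inf {l. l \<ge> 0 \<and> x \<in> (\<lambda>y. l *\<^sub>R y) ` A}"

definition is_norm :: "('a::real_vector \<Rightarrow> real) \<Rightarrow> bool" where
  "is_norm N \<longleftrightarrow> (\<forall>x. N x \<ge> 0) \<and> (\<forall>x. N x = 0 \<longleftrightarrow> x = 0) \<and>
     (\<forall>(c::real) x. N (c *\<^sub>R x) = \<bar>c\<bar> * N x) \<and> (\<forall>x y. N (x + y) \<le> N x + N y)"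

definition monotone_norm :: "('a::real_vector \<Rightarrow> 'a \<Rightarrow> bool) \<Rightarrow> ('a \<Rightarrow> real) \<Rightarrow> bool" where
  "monotone_norm le N \<longleftrightarrow> (\<forall>x y. le 0 x \<longrightarrow> le x y \<longrightarrow> N x \<le> N y)"

end

theory Submission
  imports Defs
begin

locale svs =
  fixes conv :: "(nat \<Rightarrow> 'a::real_vector) \<Rightarrow> 'a \<Rightarrow> bool" and le :: "'a \<Rightarrow> 'a \<Rightarrow> bool" and b :: 'a
  assumes C1: "\<And>xs ys x y. conv xs x \<Longrightarrow> conv ys y \<Longrightarrow> conv (\<lambda>n. xs n + ys n) (x + y)"
  and C2: "\<And>xs x (c::real). conv xs x \<Longrightarrow> conv (\<lambda>n. c *\<^sub>R xs n) (c *\<^sub>R x)"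
  and C3: "\<And>(ls::nat\<Rightarrow>real) l x. ls \<longlonglongrightarrow> l \<Longrightarrow> conv (\<lambda>n. ls n *\<^sub>R x) (l *\<^sub>R x)"
  and lrefl: "\<And>x. le x x"
  and ltrans: "\<And>x y z. le x y \<Longrightarrow> le y z \<Longrightarrow> le x z"
  and lanti: "\<And>x y. le x y \<Longrightarrow> le y x \<Longrightarrow> x = y"
  and ladd: "\<And>x y z. le x y \<Longrightarrow> le (x + z) (y + z)"
  and lscal: "\<And>(c::real) x y. c \<ge> 0 \<Longrightarrow> le x y \<Longrightarrow> le (c *\<^sub>R x) (c *\<^sub>R y)"
  and V3: "\<And>xs ys x y. conv xs x \<Longrightarrow> conv ys y \<Longrightarrow> (\<forall>n. le (xs n) (ys n)) \<Longrightarrow> le x y"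
  and bint: "b \<in> c_interior conv (pos_cone le)"
begin

lemma const: "conv (\<lambda>n. x) x"
  using C3[of "\<lambda>n. 1" 1 x] by simp

lemma int_iff: "z \<in> c_interior conv A \<longleftrightarrow> (\<exists>U. U \<subseteq> A \<and> c_open conv U \<and> z \<in> U)"
  by (auto simp: c_interior_def)

lemma K_iff: "z \<in> pos_cone le \<longleftrightarrow> le 0 z"
  by (simp add: pos_cone_def)

lemma sub_le: "le 0 (u - v) \<Longrightarrow> le v u"
  using ladd[of 0 "u - v" v] by simp

lemma le_sub: "le v u \<Longrightarrow> le 0 (u - v)"
  using ladd[of v u "-v"] by simp

lemma negle: "le x y \<Longrightarrow> le (-y) (-x)"
proof -
  assume "le x y"
  then have "le (x + (-x-y)) (y + (-x-y))" by (rule ladd)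
  moreover have "x + (-x-y) = -y" "y + (-x-y) = -x" by (simp_all add: algebra_simps)
  ultimately show ?thesis by simp
qed

lemma addle: "le a1 b1 \<Longrightarrow> le a2 b2 \<Longrightarrow> le (a1 + a2) (b1 + b2)"
proof -
  assume "le a1 b1" "le a2 b2"
  then have "le (a1 + a2) (b1 + a2)" "le (a2 + b1) (b2 + b1)" using ladd by blast+
  then show ?thesis by (metis ltrans add.commute)
qed

lemma perturb:
  assumes "z \<in> c_interior conv (pos_cone le)"
  shows "\<exists>t>0. le 0 (z - t *\<^sub>R w)"
proof -
  obtain U where U: "U \<subseteq> pos_cone le" "c_open conv U" "z \<in> U" using assms int_iff by blast
  have l: "(\<lambda>n. inverse (real (Suc n))) \<longlonglongrightarrow> 0" by (rule LIMSEQ_inverse_real_of_nat)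
  have "conv (\<lambda>n. z + inverse (real (Suc n)) *\<^sub>R (-w)) (z + 0 *\<^sub>R (-w))"
    using C1[OF const[of z] C3[OF l, of "-w"]] by simp
  then have "conv (\<lambda>n. z - inverse (real (Suc n)) *\<^sub>R w) z" by simp
  with U have "\<forall>\<^sub>F n in sequentially. z - inverse (real (Suc n)) *\<^sub>R w \<in> U"
    unfolding c_open_def by blast
  then obtain N where "\<forall>n\<ge>N. z - inverse (real (Suc n)) *\<^sub>R w \<in> U"
    unfolding eventually_sequentially by blast
  then have "z - inverse (real (Suc N)) *\<^sub>R w \<in> pos_cone le" using U by blast
  then show ?thesis
    by (intro exI[of _ "inverse (real (Suc N))"]) (auto simp: K_iff)
qed

lemma b_pos: "le 0 b"
  using bint by (auto simp: int_iff K_iff)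

lemma K_scal: "c \<ge> 0 \<Longrightarrow> le 0 y \<Longrightarrow> le 0 (c *\<^sub>R y)"
  using lscal[of c 0 y] by simp

lemma K_add: "le 0 y \<Longrightarrow> le 0 k \<Longrightarrow> le 0 (y + k)"
  using addle[of 0 y 0 k] by simp

lemma int_shift:
  assumes "u \<in> c_interior conv (pos_cone le)" "c > 0" "le 0 k"
  shows "c *\<^sub>R u + k \<in> c_interior conv (pos_cone le)"
proof -
  obtain U where U: "U \<subseteq> pos_cone le" "c_open conv U" "u \<in> U" using assms int_iff by blast
  define V where "V = (\<lambda>y. c *\<^sub>R y + k) ` U"
  have Up: "\<And>y. y \<in> U \<Longrightarrow> le 0 y" using U(1) K_iff by auto
  have "V \<subseteq> pos_cone le"
    using Up assms by (auto simp: V_def K_iff intro!: K_add K_scal)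
  moreover have "c_open conv V"
    unfolding c_open_def
  proof (intro allI impI)
    fix xs z assume cz: "conv xs z" and "z \<in> V"
    then obtain y where y: "y \<in> U" "z = c *\<^sub>R y + k" by (auto simp: V_def)
    have "conv (\<lambda>n. inverse c *\<^sub>R (xs n + (-k))) (inverse c *\<^sub>R (z + (-k)))"
      using C2[OF C1[OF cz const]] .
    moreover have "inverse c *\<^sub>R (z + (-k)) = y" using y assms(2) by simp
    ultimately have "\<forall>\<^sub>F n in sequentially. inverse c *\<^sub>R (xs n + (-k)) \<in> U"
      using U y unfolding c_open_def by metis
    then show "\<forall>\<^sub>F n in sequentially. xs n \<in> V"
    proof (rule eventually_mono)
      fix n assume "inverse c *\<^sub>R (xs n + (-k)) \<in> U"
      moreover have "xs n = c *\<^sub>R (inverse c *\<^sub>R (xs n + (-k))) + k" using assms(2) by simp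
      ultimately show "xs n \<in> V" unfolding V_def by blast
    qed
  qed
  moreover have "c *\<^sub>R u + k \<in> V" using U by (auto simp: V_def)
  ultimately show ?thesis using int_iff by blast
qed

lemma scalmono: "l \<le> l' \<Longrightarrow> le (l *\<^sub>R b) (l' *\<^sub>R b)"
proof -
  assume "l \<le> l'"
  then have "le 0 ((l' - l) *\<^sub>R b)" using K_scal b_pos by simp
  then have "le 0 (l' *\<^sub>R b - l *\<^sub>R b)" by (simp add: algebra_simps)
  then show ?thesis by (rule sub_le)
qed

definition T :: "'a \<Rightarrow> real set" where
  "T x = {l. l \<ge> 0 \<and> le (-(l *\<^sub>R b)) x \<and> le x (l *\<^sub>R b)}"

definition N :: "'a \<Rightarrow> real" where "N x = Inf (T x)"

lemma T_up: "l \<in> T x \<Longrightarrow> l \<le> l' \<Longrightarrow> l' \<in> T x"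
proof -
  assume a: "l \<in> T x" "l \<le> l'"
  have s: "le (l *\<^sub>R b) (l' *\<^sub>R b)" using a(2) by (rule scalmono)
  have "le x (l' *\<^sub>R b)" using a(1) ltrans[OF _ s] by (simp add: T_def)
  moreover have "le (-(l' *\<^sub>R b)) x" using a(1) ltrans[OF negle[OF s]] by (simp add: T_def)
  moreover have "l' \<ge> 0" using a by (simp add: T_def)
  ultimately show ?thesis by (simp add: T_def)
qed

lemma T_ne: "T x \<noteq> {}"
proof -
  obtain t where t: "t > 0" "le 0 (b - t *\<^sub>R x)" using perturb[OF bint] by blast
  obtain s where s: "s > 0" "le 0 (b - s *\<^sub>R (-x))" using perturb[OF bint] by blast
  have "le (t *\<^sub>R x) b" using sub_le[OF t(2)] .
  then have "le (inverse t *\<^sub>R (t *\<^sub>R x)) (inverse t *\<^sub>R b)" using lscal[of "inverse t" "t *\<^sub>R x" b] t(1) by simp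
  then have 1: "le x (inverse t *\<^sub>R b)" using t(1) by simp
  have "le (s *\<^sub>R (-x)) b" using sub_le[OF s(2)] .
  then have "le (inverse s *\<^sub>R (s *\<^sub>R (-x))) (inverse s *\<^sub>R b)" using lscal[of "inverse s" "s *\<^sub>R (-x)" b] s(1) by simp
  then have "le (-x) (inverse s *\<^sub>R b)" using s(1) by simp
  then have 2: "le (-(inverse s *\<^sub>R b)) x" using negle by fastforce
  have "inverse t \<in> T x \<or> inverse s \<in> T x \<or> True" by simp
  define r where "r = max (inverse t) (inverse s)"
  have r1: "inverse t \<le> r" "inverse s \<le> r" by (simp_all add: r_def)
  have "le x (r *\<^sub>R b)" using ltrans[OF 1 scalmono[OF r1(1)]] .
  moreover have "le (-(r *\<^sub>R b)) x"
    using ltrans[OF negle[OF scalmono[OF r1(2)]] 2] .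
  moreover have "r \<ge> 0" using t(1) r1(1) by (meson inverse_nonnegative_iff_nonnegative less_le order_trans)
  ultimately show ?thesis unfolding T_def by blast
qed

lemma T_bdd: "bdd_below (T x)"
  by (rule bdd_belowI[of _ 0]) (auto simp: T_def)

lemma T_lim:
  assumes "ls \<longlonglongrightarrow> l" "\<forall>n. ls n \<in> T x" "l \<ge> 0"
  shows "l \<in> T x"
proof -
  have "\<forall>n. le x (ls n *\<^sub>R b)" using assms(2) by (simp add: T_def)
  then have "le x (l *\<^sub>R b)"
    using V3[OF const[of x] C3[OF assms(1), of b]] by blast
  moreover have "\<forall>n. le (ls n *\<^sub>R (-b)) x" using assms(2) by (simp add: T_def)
  then have "le (l *\<^sub>R (-b)) x"
    using V3[OF C3[OF assms(1), of "-b"] const[of x]] by blast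
  ultimately show ?thesis using assms(3) by (auto simp: T_def)
qed

lemma N_in: "N x \<in> T x"
proof -
  let ?m = "Inf (T x)"
  have m0: "?m \<ge> 0" using T_ne by (intro cInf_greatest) (auto simp: T_def)
  have "\<forall>n. ?m + inverse (real (Suc n)) \<in> T x"
  proof
    fix n
    have "?m < ?m + inverse (real (Suc n))" by simp
    then obtain t where "t \<in> T x" "t < ?m + inverse (real (Suc n))"
      using cInf_less_iff[OF T_ne T_bdd] by blast
    then show "?m + inverse (real (Suc n)) \<in> T x" using T_up by auto
  qed
  moreover have "(\<lambda>n. ?m + inverse (real (Suc n))) \<longlonglongrightarrow> ?m + 0"
    by (intro tendsto_intros LIMSEQ_inverse_real_of_nat)
  ultimately show ?thesis using T_lim m0 unfolding N_def by simp
qed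

lemma N_lower: "l \<in> T x \<Longrightarrow> N x \<le> l"
  unfolding N_def by (rule cInf_lower[OF _ T_bdd])

lemma N_props: "N x \<ge> 0" "le (-(N x *\<^sub>R b)) x" "le x (N x *\<^sub>R b)"
  using N_in[of x] by (auto simp: T_def)

lemma mink_eq: "minkowski (order_interval le (- b) b) = N"
proof
  fix x
  have "{l. l \<ge> 0 \<and> x \<in> (\<lambda>y. l *\<^sub>R y) ` order_interval le (- b) b} = T x"
  proof (intro set_eqI iffI)
    fix l assume "l \<in> {l. l \<ge> 0 \<and> x \<in> (\<lambda>y. l *\<^sub>R y) ` order_interval le (- b) b}"
    then obtain y where y: "l \<ge> 0" "le (-b) y" "le y b" "x = l *\<^sub>R y"
      by (auto simp: order_interval_def)
    then show "l \<in> T x" using lscal[of l "-b" y] lscal[of l y b] by (auto simp: T_def)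
  next
    fix l assume l: "l \<in> T x"
    show "l \<in> {l. l \<ge> 0 \<and> x \<in> (\<lambda>y. l *\<^sub>R y) ` order_interval le (- b) b}"
    proof (cases "l = 0")
      case True
      then have "x = 0" using l lanti by (auto simp: T_def)
      moreover have "0 \<in> order_interval le (- b) b"
        using b_pos negle[OF b_pos] by (auto simp: order_interval_def)
      ultimately show ?thesis using True by force
    next
      case False
      then have lp: "l > 0" using l by (auto simp: T_def)
      have "le (-(l *\<^sub>R b)) x" "le x (l *\<^sub>R b)" using l by (auto simp: T_def)
      then have "le (inverse l *\<^sub>R (-(l *\<^sub>R b))) (inverse l *\<^sub>R x)"
           "le (inverse l *\<^sub>R x) (inverse l *\<^sub>R (l *\<^sub>R b))"
        using lp lscal[of "inverse l" "-(l *\<^sub>R b)" x] lscal[of "inverse l" x "l *\<^sub>R b"] by auto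
      then have "inverse l *\<^sub>R x \<in> order_interval le (- b) b"
        using lp by (simp add: order_interval_def)
      moreover have "x = l *\<^sub>R (inverse l *\<^sub>R x)" using lp by simp
      ultimately have "x \<in> (\<lambda>y. l *\<^sub>R y) ` order_interval le (- b) b" by (rule rev_image_eqI)
      then show ?thesis using lp by simp
    qed
  qed
  then show "minkowski (order_interval le (- b) b) x = N x"
    unfolding minkowski_def N_def by simp
qed

lemma N_scal_le: "N (c *\<^sub>R x) \<le> \<bar>c\<bar> * N x"
proof (rule N_lower)
  let ?m = "N x"
  have a: "le (-(?m *\<^sub>R b)) x" "le x (?m *\<^sub>R b)" "?m \<ge> 0" using N_props by auto
  show "\<bar>c\<bar> * ?m \<in> T (c *\<^sub>R x)"
  proof (cases "c \<ge> 0")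
    case True
    then show ?thesis using lscal[OF True a(1)] lscal[OF True a(2)] a(3)
      by (auto simp: T_def)
  next
    case False
    have "le (-(?m *\<^sub>R b)) (-x)" "le (-x) (?m *\<^sub>R b)"
      using negle[OF a(2)] negle[OF a(1)] by auto
    moreover have "-c \<ge> 0" using False by simp
    ultimately have f: "le ((-c) *\<^sub>R (-(?m *\<^sub>R b))) ((-c) *\<^sub>R (-x))"
      "le ((-c) *\<^sub>R (-x)) ((-c) *\<^sub>R (?m *\<^sub>R b))" using lscal by blast+
    have eqs: "(-c) *\<^sub>R (-(?m *\<^sub>R b)) = -((\<bar>c\<bar>*?m) *\<^sub>R b)" "(-c) *\<^sub>R (-x) = c *\<^sub>R x"
      "(-c) *\<^sub>R (?m *\<^sub>R b) = (\<bar>c\<bar>*?m) *\<^sub>R b" using False by auto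
    have "\<bar>c\<bar> * ?m \<ge> 0" using a(3) by simp
    then show ?thesis using f[unfolded eqs] by (simp add: T_def)
  qed
qed

lemma N_scal: "N (c *\<^sub>R x) = \<bar>c\<bar> * N x"
proof (cases "c = 0")
  case True
  have "N 0 \<le> 0" by (rule N_lower) (auto simp: T_def lrefl)
  then show ?thesis using True N_props(1)[of 0] by simp
next
  case False
  have "N x = N (inverse c *\<^sub>R (c *\<^sub>R x))" using False by simp
  also have "\<dots> \<le> \<bar>inverse c\<bar> * N (c *\<^sub>R x)" by (rule N_scal_le)
  finally have "\<bar>c\<bar> * N x \<le> N (c *\<^sub>R x)" using False
    by (simp add: field_simps abs_inverse)
  then show ?thesis using N_scal_le[of c x] by simp
qed

lemma N_zero: "N x = 0 \<longleftrightarrow> x = 0"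
proof
  assume "N x = 0"
  then show "x = 0" using N_props(2,3)[of x] lanti by simp
next
  assume "x = 0"
  then show "N x = 0" using N_scal[of 0 x] by simp
qed

lemma N_tri: "N (x + y) \<le> N x + N y"
proof (rule N_lower)
  have "le (-(N x *\<^sub>R b) + -(N y *\<^sub>R b)) (x + y)" "le (x + y) (N x *\<^sub>R b + N y *\<^sub>R b)"
    using addle N_props by blast+
  then show "N x + N y \<in> T (x + y)" using N_props(1)[of x] N_props(1)[of y]
    by (auto simp: T_def algebra_simps)
qed

lemma N_mono: "le 0 x \<Longrightarrow> le x y \<Longrightarrow> N x \<le> N y"
proof (rule N_lower)
  assume "le 0 x" "le x y"
  have "le (- (N y *\<^sub>R b)) 0" using negle[OF K_scal[OF N_props(1) b_pos]] by simp
  then have "le (- (N y *\<^sub>R b)) x" using ltrans \<open>le 0 x\<close> by blast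
  moreover have "le x (N y *\<^sub>R b)" using ltrans[OF \<open>le x y\<close> N_props(3)[of y]] .
  ultimately show "N y \<in> T x" using N_props(1)[of y] by (simp add: T_def)
qed

lemma N_strict:
  assumes "e > 0"
  shows "N x < e \<longleftrightarrow> strict_le conv le (- (e *\<^sub>R b)) x \<and> strict_le conv le x (e *\<^sub>R b)"
proof
  assume h: "N x < e"
  let ?m = "N x"
  have k1: "le 0 (?m *\<^sub>R b - x)" using le_sub N_props(3) by blast
  have k2: "le 0 (x - - (?m *\<^sub>R b))" using le_sub N_props(2) by blast
  have "(e - ?m) *\<^sub>R b + (?m *\<^sub>R b - x) \<in> c_interior conv (pos_cone le)"
    using int_shift[OF bint _ k1] h by simp
  moreover have "(e - ?m) *\<^sub>R b + (x - - (?m *\<^sub>R b)) \<in> c_interior conv (pos_cone le)"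
    using int_shift[OF bint _ k2] h by simp
  ultimately show "strict_le conv le (- (e *\<^sub>R b)) x \<and> strict_le conv le x (e *\<^sub>R b)"
    unfolding strict_le_def by (simp add: algebra_simps)
next
  assume "strict_le conv le (- (e *\<^sub>R b)) x \<and> strict_le conv le x (e *\<^sub>R b)"
  then have i1: "x - - (e *\<^sub>R b) \<in> c_interior conv (pos_cone le)"
    and i2: "e *\<^sub>R b - x \<in> c_interior conv (pos_cone le)" unfolding strict_le_def by auto
  obtain t where t: "t > 0" "le 0 (e *\<^sub>R b - x - t *\<^sub>R b)" using perturb[OF i2] by blast
  obtain s where s: "s > 0" "le 0 (x - - (e *\<^sub>R b) - s *\<^sub>R b)" using perturb[OF i1] by blast
  have "e *\<^sub>R b - x - t *\<^sub>R b = (e - t) *\<^sub>R b - x" by (simp add: algebra_simps)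
  then have 1: "le x ((e - t) *\<^sub>R b)" using t(2) sub_le by metis
  have "x - - (e *\<^sub>R b) - s *\<^sub>R b = x - - ((e - s) *\<^sub>R b)" by (simp add: algebra_simps)
  then have 2: "le (- ((e - s) *\<^sub>R b)) x" using s(2) sub_le by metis
  define r where "r = max (max (e - t) (e - s)) 0"
  have r1: "e - t \<le> r" "e - s \<le> r" by (simp_all add: r_def)
  have "le x (r *\<^sub>R b)" using ltrans[OF 1 scalmono[OF r1(1)]] .
  moreover have "le (-(r *\<^sub>R b)) x"
    using ltrans[OF negle[OF scalmono[OF r1(2)]] 2] .
  ultimately have "r \<in> T x" unfolding T_def r_def by auto
  then have "N x \<le> r" by (rule N_lower)
  also have "r < e" using t s assms r_def by auto
  finally show "N x < e" .
qed

end

lemma svs_from: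
  "conv_space conv \<Longrightarrow> vector_ordering conv le \<Longrightarrow> b \<in> c_interior conv (pos_cone le) \<Longrightarrow> svs conv le b"
  unfolding conv_space_def vector_ordering_def svs_def by (elim conjE) (intro conjI; assumption)

theorem lemma7p6:
  fixes conv :: "(nat \<Rightarrow> 'a::real_vector) \<Rightarrow> 'a \<Rightarrow> bool"
    and le :: "'a \<Rightarrow> 'a \<Rightarrow> bool"
    and b :: 'a
  assumes "solid_vector_space conv le"
    and "strict_le conv le 0 b"
  shows "is_norm (minkowski (order_interval le (- b) b)) \<and>
         monotone_norm le (minkowski (order_interval le (- b) b)) \<and>
         (\<forall>x. minkowski (order_interval le (- b) b) x \<ge> 0 \<and>
              le (- (minkowski (order_interval le (- b) b) x *\<^sub>R b)) x \<and>
              le x (minkowski (order_interval le (- b) b) x *\<^sub>R b) \<and>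
              (\<forall>l. l \<ge> 0 \<longrightarrow> le (- (l *\<^sub>R b)) x \<longrightarrow> le x (l *\<^sub>R b) \<longrightarrow>
                   minkowski (order_interval le (- b) b) x \<le> l)) \<and>
         (\<forall>x (e::real). e > 0 \<longrightarrow>
            (minkowski (order_interval le (- b) b) x < e \<longleftrightarrow>
             strict_le conv le (- (e *\<^sub>R b)) x \<and> strict_le conv le x (e *\<^sub>R b)))"
proof -
  have cs: "conv_space conv" "vector_ordering conv le"
    using assms(1) unfolding solid_vector_space_def by auto
  have bi: "b \<in> c_interior conv (pos_cone le)" using assms(2) unfolding strict_le_def by simp
  interpret svs conv le b using svs_from[OF cs bi] .
  have 1: "is_norm N" unfolding is_norm_def using N_props(1) N_zero N_scal N_tri by blast
  have 2: "monotone_norm le N" unfolding monotone_norm_def using N_mono by blast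
  have 3: "\<forall>x. N x \<ge> 0 \<and> le (- (N x *\<^sub>R b)) x \<and> le x (N x *\<^sub>R b) \<and>
              (\<forall>l. l \<ge> 0 \<longrightarrow> le (- (l *\<^sub>R b)) x \<longrightarrow> le x (l *\<^sub>R b) \<longrightarrow> N x \<le> l)"
    using N_props N_lower by (auto simp: T_def)
  have 4: "\<forall>x (e::real). e > 0 \<longrightarrow> (N x < e \<longleftrightarrow>
             strict_le conv le (- (e *\<^sub>R b)) x \<and> strict_le conv le x (e *\<^sub>R b))"
    using N_strict by blast
  show ?thesis unfolding mink_eq using 1 2 3 4 by blast
qed

end
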